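(* Fix $y>0$ and prices $0\le p_1'<p_1''\le y$, and consider an increase in the price of good 1 from $p_1'$ to $p_1''$. Suppose Assumptions 1 (with $U_0$ strictly increasing) and 2 hold. For a consumer $i$ with threshold $t_i$: 1. If $p_1'\ge t_i$ (no attention), then regardless of preferences $S^{EV}=0$. 2. If $U_1(y-p_1')\le U_0(y)$, then regardless of attention $S^{EV}=0$. 3. If $U_1(y-p_1'')\le U_0(y)<U_1(y-p_1')$, then for both full attention ($p_1'<p_1''<t_i$) and partial attention ($p_1'<t_i\le p_1''$) consumers, $S^{EV}=y-p_1'-U_1^{-1}(U_0(y))=p^{10}-p_1'\le p_1''-p_1'$. 4. If $U_0(y)<U_1(y-p_1'')<U_1(y-p_1')$, then (a) if $p_1'<p_1''<t_i$ (full attention), $S^{EV}=p_1''-p_1'$; (b) if $p_1'<t_i\le p_1''$ (partial attention), $S^{EV}=y-p_1'-U_1^{-1}(U_0(y))=p^{10}-p_1'>p_1''-p_1'$. Here $p^{10}$ denotes the price of good 1 satisfying $U_1(y-p^{10})=U_0(y)$.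
   Context: Two goods, $0$ (price $0$) and $1$ (price $p_1\ge0$). All consumers have common income $y>0$, choose one good and spend the remainder on a numeraire. All consumers share utility functions $U_0:(0,\infty)\to[0,\infty)$ and $U_1:[0,\infty)\to[0,\infty)$ of the numeraire amount. Each consumer $i$ has an attention-price threshold $t_i$, distributed in the population with CDF $G$; consumer $i$ considers good 1 at price $p_1$ iff $p_1<t_i$ (good 0 is always considered) and chooses her utility-maximizing considered good, ties broken toward good 0. Assumption 1: (i) $U_0$ strictly increasing, $U_1$ continuous and strictly increasing; (ii) for every $y>0$ there is $\bar p_1\in[0,y]$ with $U_0(y)\ge U_1(y-\bar p_1)$. Assumption 2: $G(0)=0$. Equivalent variation of consumer $i$ for the price increase from $p_1'$ to $p_1''$: if $p_1''<t_i$ (full attention), $S^{EV}$ is the solution $S$ of $\max\{U_0(y-S),U_1(y-S-p_1')\}=\max\{U_0(y),U_1(y-p_1'')\}$; if $p_1'<t_i\le p_1''$ (partial attention), it solves $\max\{U_0(y-S),U_1(y-S-p_1')\}=U_0(y)$; if $p_1'\ge t_i$ (no attention), it solves $U_0(y-S)=U_0(y)$. *)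

theory Defs
  imports "HOL-Analysis.Analysis"
begin

text \<open>Utility of a consumer with numeraire budget m who considers both goods,
  good 1 costing p: she picks the better affordable good (good 1 is affordable iff p \<le> m).\<close>
definition val2 :: "(real \<Rightarrow> real) \<Rightarrow> (real \<Rightarrow> real) \<Rightarrow> real \<Rightarrow> real \<Rightarrow> real" where
  "val2 U0 U1 m p = (if p \<le> m then max (U0 m) (U1 (m - p)) else U0 m)"

text \<open>The left-hand side requires y - S > 0,
  i.e. the compensated income stays in the domain of U0.\<close>
definition is_EV :: "(real \<Rightarrow> real) \<Rightarrow> (real \<Rightarrow> real) \<Rightarrow> real \<Rightarrow> real \<Rightarrow> real \<Rightarrow> real \<Rightarrow> real \<Rightarrow> bool" where
  "is_EV U0 U1 y p' p'' t S \<longleftrightarrow> S < y \<and>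
     (if p'' < t then val2 U0 U1 (y - S) p' = val2 U0 U1 y p''
      else if p' < t then val2 U0 U1 (y - S) p' = U0 y
      else U0 (y - S) = U0 y)"

definition p10 :: "(real \<Rightarrow> real) \<Rightarrow> (real \<Rightarrow> real) \<Rightarrow> real \<Rightarrow> real" where
  "p10 U0 U1 y = y - the_inv_into {0..} U1 (U0 y)"

end

theory Submission
  imports Defs
begin

lemma key_r:
  fixes U0 U1 :: "real \<Rightarrow> real"
  assumes U0m: "strict_mono_on {0<..} U0" and U1m: "strict_mono_on {0..} U1"
    and p: "p \<ge> 0" and r: "r \<ge> 0" "p + r > 0" "U1 r = c" "U0 (p + r) \<le> c"
    and m: "m > 0"
  shows "val2 U0 U1 m p = c \<longleftrightarrow> m = p + r"
proof (cases "m = p + r")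
  case True
  then show ?thesis using r by (simp add: val2_def)
next
  case False
  show ?thesis
  proof (cases "m < p + r")
    case True
    have "U0 m < U0 (p + r)" using strict_mono_onD[OF U0m, of m "p+r"] True m r by auto
    moreover have "p \<le> m \<Longrightarrow> U1 (m - p) < U1 r"
      using strict_mono_onD[OF U1m, of "m-p" r] True by auto
    ultimately show ?thesis using r False by (auto simp: val2_def)
  next
    case False2: False
    hence "m > p + r" using False by auto
    hence "U1 (m - p) > U1 r" using strict_mono_onD[OF U1m, of r "m-p"] r by auto
    then show ?thesis using False \<open>m > p + r\<close> r by (auto simp: val2_def)
  qed
qed

lemma key_0:
  fixes U0 U1 :: "real \<Rightarrow> real"
  assumes U0m: "strict_mono_on {0<..} U0" and U1m: "strict_mono_on {0..} U1"
    and p: "p \<ge> 0" and y: "y > 0" and h: "U1 (y - p) \<le> U0 y" and m: "m > 0"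
  shows "val2 U0 U1 m p = U0 y \<longleftrightarrow> m = y"
proof (cases "m = y")
  case True
  then show ?thesis using h by (simp add: val2_def)
next
  case False
  show ?thesis
  proof (cases "m < y")
    case True
    have "U0 m < U0 y" using strict_mono_onD[OF U0m, of m y] True m y by auto
    moreover have "p \<le> m \<Longrightarrow> U1 (m - p) < U1 (y - p)"
      using strict_mono_onD[OF U1m, of "m-p" "y-p"] True by auto
    ultimately show ?thesis using h False by (auto simp: val2_def)
  next
    case False2: False
    hence "m > y" using False by auto
    hence "U0 m > U0 y" using strict_mono_onD[OF U0m, of y m] y by auto
    then show ?thesis using False by (auto simp: val2_def)
  qed
qed

theorem lemma1:
  fixes U0 U1 :: "real \<Rightarrow> real" and y p' p'' t :: real
  assumes U0_mono: "strict_mono_on {0<..} U0"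
    and U0_nonneg: "\<And>m. m > 0 \<Longrightarrow> U0 m \<ge> 0"
    and U1_mono: "strict_mono_on {0..} U1"
    and U1_cont: "continuous_on {0..} U1"
    and U1_nonneg: "\<And>m. m \<ge> 0 \<Longrightarrow> U1 m \<ge> 0"
    and A1ii: "\<And>z. z > 0 \<Longrightarrow> \<exists>pb \<in> {0..z}. U0 z \<ge> U1 (z - pb)"
    and t_pos: "t > 0"
    and y_pos: "y > 0"
    and prices: "0 \<le> p'" "p' < p''" "p'' \<le> y"
  shows
    "(p' \<ge> t \<longrightarrow> (\<forall>S. is_EV U0 U1 y p' p'' t S \<longleftrightarrow> S = 0))
     \<and> (U1 (y - p') \<le> U0 y \<longrightarrow> (\<forall>S. is_EV U0 U1 y p' p'' t S \<longleftrightarrow> S = 0))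
     \<and> (U1 (y - p'') \<le> U0 y \<and> U0 y < U1 (y - p') \<and> p' < t \<longrightarrow>
          (\<forall>S. is_EV U0 U1 y p' p'' t S \<longleftrightarrow> S = y - p' - the_inv_into {0..} U1 (U0 y))
          \<and> y - p' - the_inv_into {0..} U1 (U0 y) = p10 U0 U1 y - p'
          \<and> p10 U0 U1 y - p' \<le> p'' - p')
     \<and> (U0 y < U1 (y - p'') \<and> U1 (y - p'') < U1 (y - p') \<longrightarrow>
          (p'' < t \<longrightarrow> (\<forall>S. is_EV U0 U1 y p' p'' t S \<longleftrightarrow> S = p'' - p'))
          \<and> (p' < t \<and> t \<le> p'' \<longrightarrow>
               (\<forall>S. is_EV U0 U1 y p' p'' t S \<longleftrightarrow> S = y - p' - the_inv_into {0..} U1 (U0 y))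
               \<and> y - p' - the_inv_into {0..} U1 (U0 y) = p10 U0 U1 y - p'
               \<and> p10 U0 U1 y - p' > p'' - p'))"
proof -
  have inj: "inj_on U1 {0..}" using strict_mono_on_imp_inj_on[OF U1_mono] .
  have U10: "U1 0 < U0 y"
  proof -
    obtain pb where pb: "pb \<in> {0..y/2}" "U0 (y/2) \<ge> U1 (y/2 - pb)" using A1ii[of "y/2"] y_pos by auto
    have "U1 0 \<le> U1 (y/2 - pb)" using strict_mono_on_leD[OF U1_mono, of 0 "y/2-pb"] pb by auto
    moreover have "U0 (y/2) < U0 y" using strict_mono_onD[OF U0_mono, of "y/2" y] y_pos by auto
    ultimately show ?thesis using pb by linarith
  qed
  have yp'': "U1 (y - p'') < U1 (y - p')"
    using strict_mono_onD[OF U1_mono, of "y-p''" "y-p'"] prices by auto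
  have val_y: "val2 U0 U1 y p'' = max (U0 y) (U1 (y - p''))" using prices by (simp add: val2_def)
  have inv: "the_inv_into {0..} U1 (U0 y) > 0 \<and> the_inv_into {0..} U1 (U0 y) \<ge> a \<and> the_inv_into {0..} U1 (U0 y) < b \<and> U1 (the_inv_into {0..} U1 (U0 y)) = U0 y"
    if ab: "0 \<le> a" "a \<le> b" "U1 a \<le> U0 y" "U0 y < U1 b" for a b
  proof -
    obtain q where q: "q \<ge> a" "q \<le> b" "U1 q = U0 y"
      using IVT'[of U1 a "U0 y" b] ab continuous_on_subset[OF U1_cont, of "{a..b}"] by force
    have "q \<noteq> b" using q ab by auto
    moreover have "q \<noteq> 0" using q U10 by auto
    moreover have "the_inv_into {0..} U1 (U0 y) = q"
      using the_inv_into_f_f[OF inj, of q] q ab by auto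
    ultimately show ?thesis using q ab by auto
  qed
  have uq: "U1 (the_inv_into {0..} U1 (U0 y)) = U0 y"
    if "the_inv_into {0..} U1 (U0 y) = q" "q \<ge> 0" "U1 q = U0 y" for q
    using that by simp
  have part1: "p' \<ge> t \<longrightarrow> (\<forall>S. is_EV U0 U1 y p' p'' t S \<longleftrightarrow> S = 0)"
  proof (intro impI allI)
    fix S assume "p' \<ge> t"
    hence nt: "\<not> p'' < t" "\<not> p' < t" using prices by auto
    have "S < y \<Longrightarrow> U0 (y - S) = U0 y \<longleftrightarrow> S = 0"
      using strict_mono_on_imp_inj_on[OF U0_mono] y_pos unfolding inj_on_def by force
    then show "is_EV U0 U1 y p' p'' t S \<longleftrightarrow> S = 0" using nt y_pos by (auto simp: is_EV_def)
  qed
  have part2: "U1 (y - p') \<le> U0 y \<longrightarrow> (\<forall>S. is_EV U0 U1 y p' p'' t S \<longleftrightarrow> S = 0)"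
  proof (intro impI allI)
    fix S assume h: "U1 (y - p') \<le> U0 y"
    have r: "val2 U0 U1 y p'' = U0 y" using val_y yp'' h by simp
    have k: "S < y \<Longrightarrow> val2 U0 U1 (y - S) p' = U0 y \<longleftrightarrow> S = 0"
      using key_0[OF U0_mono U1_mono prices(1) y_pos h, of "y - S"] by auto
    have "S < y \<Longrightarrow> U0 (y - S) = U0 y \<longleftrightarrow> S = 0"
      using strict_mono_on_imp_inj_on[OF U0_mono] y_pos unfolding inj_on_def by force
    then show "is_EV U0 U1 y p' p'' t S \<longleftrightarrow> S = 0" using k r y_pos by (auto simp: is_EV_def)
  qed
  have part3: "U1 (y - p'') \<le> U0 y \<and> U0 y < U1 (y - p') \<and> p' < t \<longrightarrow>
          (\<forall>S. is_EV U0 U1 y p' p'' t S \<longleftrightarrow> S = y - p' - the_inv_into {0..} U1 (U0 y))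
          \<and> y - p' - the_inv_into {0..} U1 (U0 y) = p10 U0 U1 y - p'
          \<and> p10 U0 U1 y - p' \<le> p'' - p'"
  proof (intro impI conjI allI)
    assume h: "U1 (y - p'') \<le> U0 y \<and> U0 y < U1 (y - p') \<and> p' < t"
    define q where "q = the_inv_into {0..} U1 (U0 y)"
    have q: "q > 0" "q \<ge> y - p''" "q < y - p'" using inv[of "y-p''" "y-p'"] h prices q_def by auto
    have Uq: "U1 q = U0 y" using inv[of "y-p''" "y-p'"] h prices q_def by auto
    have U0pq: "U0 (p' + q) \<le> U0 y"
      using strict_mono_on_leD[OF U0_mono, of "p'+q" y] q prices by auto
    have r: "val2 U0 U1 y p'' = U0 y" using val_y h by simp
    fix S
    have k: "S < y \<Longrightarrow> val2 U0 U1 (y - S) p' = U0 y \<longleftrightarrow> S = y - p' - q"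
      using key_r[OF U0_mono U1_mono prices(1), of q "U0 y" "y - S"] q Uq U0pq prices by auto
    show "is_EV U0 U1 y p' p'' t S \<longleftrightarrow> S = y - p' - the_inv_into {0..} U1 (U0 y)"
      using k r h q prices unfolding q_def[symmetric] by (auto simp: is_EV_def)
  next
    show "y - p' - the_inv_into {0..} U1 (U0 y) = p10 U0 U1 y - p'" by (simp add: p10_def)
  next
    assume h: "U1 (y - p'') \<le> U0 y \<and> U0 y < U1 (y - p') \<and> p' < t"
    show "p10 U0 U1 y - p' \<le> p'' - p'"
      using inv[of "y-p''" "y-p'"] h prices by (auto simp: p10_def)
  qed
  have part4: "U0 y < U1 (y - p'') \<and> U1 (y - p'') < U1 (y - p') \<longrightarrow>
          (p'' < t \<longrightarrow> (\<forall>S. is_EV U0 U1 y p' p'' t S \<longleftrightarrow> S = p'' - p'))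
          \<and> (p' < t \<and> t \<le> p'' \<longrightarrow>
               (\<forall>S. is_EV U0 U1 y p' p'' t S \<longleftrightarrow> S = y - p' - the_inv_into {0..} U1 (U0 y))
               \<and> y - p' - the_inv_into {0..} U1 (U0 y) = p10 U0 U1 y - p'
               \<and> p10 U0 U1 y - p' > p'' - p')"
  proof (intro impI conjI allI)
    assume h: "U0 y < U1 (y - p'') \<and> U1 (y - p'') < U1 (y - p')"
    have ypos: "y - p'' > 0"
    proof (rule ccontr)
      assume "\<not> y - p'' > 0" hence "y - p'' = 0" using prices by auto
      thus False using h U10 by auto
    qed
    assume t: "p'' < t"
    fix S
    have r: "val2 U0 U1 y p'' = U1 (y - p'')" using val_y h by simp
    have U0le: "U0 (p' + (y - p'')) \<le> U1 (y - p'')"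
      using strict_mono_on_leD[OF U0_mono, of "p' + (y - p'')" y] h prices ypos by auto
    have k: "S < y \<Longrightarrow> val2 U0 U1 (y - S) p' = U1 (y - p'') \<longleftrightarrow> S = p'' - p'"
      using key_r[OF U0_mono U1_mono prices(1), of "y - p''" "U1 (y - p'')" "y - S"] U0le ypos prices
      by auto
    show "is_EV U0 U1 y p' p'' t S \<longleftrightarrow> S = p'' - p'"
      using k r t ypos prices by (auto simp: is_EV_def)
  next
    assume h: "U0 y < U1 (y - p'') \<and> U1 (y - p'') < U1 (y - p')"
    assume t: "p' < t \<and> t \<le> p''"
    define q where "q = the_inv_into {0..} U1 (U0 y)"
    have q: "q > 0" "q < y - p''" using inv[of 0 "y-p''"] h prices q_def U10 by auto
    have Uq: "U1 q = U0 y" using inv[of 0 "y-p''"] h prices q_def U10 by auto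
    have U0pq: "U0 (p' + q) \<le> U0 y"
      using strict_mono_on_leD[OF U0_mono, of "p'+q" y] q prices by auto
    fix S
    have k: "S < y \<Longrightarrow> val2 U0 U1 (y - S) p' = U0 y \<longleftrightarrow> S = y - p' - q"
      using key_r[OF U0_mono U1_mono prices(1), of q "U0 y" "y - S"] q Uq U0pq prices by auto
    show "is_EV U0 U1 y p' p'' t S \<longleftrightarrow> S = y - p' - the_inv_into {0..} U1 (U0 y)"
      using k t q prices unfolding q_def[symmetric] by (auto simp: is_EV_def)
  next
    show "y - p' - the_inv_into {0..} U1 (U0 y) = p10 U0 U1 y - p'" by (simp add: p10_def)
  next
    assume h: "U0 y < U1 (y - p'') \<and> U1 (y - p'') < U1 (y - p')"
    show "p10 U0 U1 y - p' > p'' - p'"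
      using inv[of 0 "y-p''"] h prices U10 by (auto simp: p10_def)
  qed
  show ?thesis using part1 part2 part3 part4 by blast
qed

end
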